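(* Let $p\ge 1$ and $c>0$ be constants. For $a>0$ let $x_a:[0,\infty)\to\mathbb{R}$ be the unique solution of $$x'''+c\,x^p\, x''=0,\qquad x(0)=0=x'(0),\quad x''(0)=a,$$ and let $h(a):=\lim_{t\to\infty}x_a'(t)$ (which exists and is finite). Define $$c_2:=\Gamma\!\left(\tfrac{1}{2p+1}\right)\left(\frac{2^p}{c\,(2p+1)^{2p}}\right)^{\frac{1}{2p+1}},\qquad c_3:=\Gamma\!\left(\tfrac{2}{2p+1}\right)(2p+1)^{\frac{1-2p}{2p+1}}\left(\frac{2^p}{c}\right)^{\frac{2}{2p+1}},$$ $$c_1:=\frac{c_3}{c_2}+\frac{\Gamma\big(1/(p+1)\big)}{c^{1/(p+1)}\,\big(c_2(p+1)\big)^{p/(p+1)}}.$$ Then for every $a>0$, $$c_2\, a^{(p+1)/(2p+1)}\le h(a)\le c_1\, a^{(p+1)/(2p+1)}.$$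
   Context: $\Gamma$ denotes the Euler Gamma function. *)

theory Defs
  imports "HOL-Analysis.Analysis"
begin

definition const_c2 :: "real \<Rightarrow> real \<Rightarrow> real" where
  "const_c2 p c = Gamma (1 / (2*p+1)) *
     (2 powr p / (c * (2*p+1) powr (2*p))) powr (1 / (2*p+1))"

definition const_c3 :: "real \<Rightarrow> real \<Rightarrow> real" where
  "const_c3 p c = Gamma (2 / (2*p+1)) * (2*p+1) powr ((1 - 2*p) / (2*p+1)) *
     (2 powr p / c) powr (2 / (2*p+1))"

definition const_c1 :: "real \<Rightarrow> real \<Rightarrow> real" where
  "const_c1 p c = const_c3 p c / const_c2 p c +
     Gamma (1 / (p+1)) / (c powr (1/(p+1)) * (const_c2 p c * (p+1)) powr (p/(p+1)))"

end

theory Submission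
  imports Defs
begin


lemma incr_open:
  fixes f f' :: "real \<Rightarrow> real"
  assumes "a \<le> b" "continuous_on {a..b} f"
    "\<And>t. a < t \<Longrightarrow> t < b \<Longrightarrow> (f has_real_derivative f' t) (at t)"
    "\<And>t. a < t \<Longrightarrow> t < b \<Longrightarrow> f' t \<ge> 0"
  shows "f a \<le> f b"
  by (rule DERIV_nonneg_imp_increasing_open[OF assms(1) _ assms(2)]) (use assms(3,4) in blast)

lemma deriv_at_pos:
  fixes f :: "real \<Rightarrow> real"
  assumes "(f has_real_derivative D) (at t within {0..})" "t > 0"
  shows "(f has_real_derivative D) (at t)"
proof -
  have "t \<in> interior {0..}" using assms(2) by (simp add: interior_real_atLeast)
  then have "at t within {0..} = at t" by (rule at_within_interior)
  with assms(1) show ?thesis by simp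
qed

lemma deriv_at_gt:
  fixes f :: "real \<Rightarrow> real"
  assumes "(f has_real_derivative D) (at t within {s..})" "t > s"
  shows "(f has_real_derivative D) (at t)"
proof -
  have "t \<in> interior {s..}" using assms(2) by (simp add: interior_real_atLeast)
  then have "at t within {s..} = at t" by (rule at_within_interior)
  with assms(1) show ?thesis by simp
qed

lemma cont_from_deriv:
  fixes f f' :: "real \<Rightarrow> real"
  assumes "\<And>t. t \<ge> 0 \<Longrightarrow> (f has_real_derivative f' t) (at t within {0..})"
  shows "continuous_on {0..} f"
proof -
  have "continuous (at t within {0..}) f" if "t \<in> {0..}" for t
    using assms that by (intro DERIV_continuous) auto
  then show ?thesis by (simp add: continuous_on_eq_continuous_within)
qed

lemma mono_lim:
  fixes f :: "real \<Rightarrow> real"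
  assumes "\<And>s t. a \<le> s \<Longrightarrow> s \<le> t \<Longrightarrow> f s \<le> f t" "\<And>t. t \<ge> a \<Longrightarrow> f t \<le> B"
  shows "(f \<longlongrightarrow> Sup (f ` {a..})) at_top"
proof (rule increasing_tendsto)
  have bdd: "bdd_above (f ` {a..})" using assms(2) by (auto intro!: bdd_aboveI)
  show "\<forall>\<^sub>F n in at_top. f n \<le> Sup (f ` {a..})"
    using eventually_ge_at_top[of a] by eventually_elim (auto intro!: cSup_upper bdd)
  fix y assume "y < Sup (f ` {a..})"
  then obtain t where t: "t \<ge> a" "y < f t"
    using less_cSup_iff[OF _ bdd] by auto
  show "\<forall>\<^sub>F n in at_top. y < f n"
    using eventually_ge_at_top[of t] by eventually_elim (use t assms(1) in force)
qed

lemma integral_lim: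
  fixes h :: "real \<Rightarrow> real"
  assumes "(h has_integral l) {a..}" "\<And>y. y \<ge> a \<Longrightarrow> h y \<ge> 0"
  shows "((\<lambda>y. integral {a..y} h) \<longlongrightarrow> l) at_top"
proof -
  have int: "h integrable_on {a..y}" for y
  proof (cases "a \<le> y")
    case True
    show ?thesis using assms(1) by (rule integrable_on_subinterval[OF has_integral_integrable]) auto
  qed auto
  have le: "integral {a..y} h \<le> l" for y
  proof -
    have "integral {a..y} h \<le> integral {a..} h"
      using assms int by (intro integral_subset_le) (auto simp: has_integral_integrable)
    then show ?thesis using assms(1) by (simp add: integral_unique)
  qed
  have mono: "integral {a..s} h \<le> integral {a..t} h" if "a \<le> s" "s \<le> t" for s t
    using that int assms(2) by (intro integral_subset_le) auto
  define l' where "l' = Sup ((\<lambda>y. integral {a..y} h) ` {a..})"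
  have lim: "((\<lambda>y. integral {a..y} h) \<longlongrightarrow> l') at_top"
    unfolding l'_def by (rule mono_lim[OF mono le]) 
  have "(h has_integral l') {a..}"
    by (rule has_integral_to_inf[OF int lim assms(2)])
  then have "l = l'" using assms(1) by (rule has_integral_unique[rotated])
  then show ?thesis using lim by simp
qed



lemma powr_at_top_lim:
  fixes m Q :: real assumes "m > 0" "Q > 0"
  shows "filterlim (\<lambda>t. m * t powr Q) at_top at_top"
  unfolding filterlim_at_top
proof
  fix Z :: real
  define T0 where "T0 = (\<bar>Z\<bar>/m) powr (1/Q)"
  show "\<forall>\<^sub>F t in at_top. Z \<le> m * t powr Q"
    using eventually_ge_at_top[of T0]
  proof eventually_elim
    case (elim t)
    have "T0 powr Q \<le> t powr Q" using elim assms by (intro powr_mono2) (auto simp: T0_def)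
    moreover have "T0 powr Q = \<bar>Z\<bar>/m" using assms by (simp add: T0_def powr_powr)
    ultimately have "\<bar>Z\<bar> \<le> m * t powr Q" using assms by (simp add: field_simps)
    then show ?case by linarith
  qed
qed

lemma gamma_lim:
  fixes m Q :: real and n :: nat
  assumes m: "m > 0" and Q: "Q > 0"
  shows "((\<lambda>t. integral {0..t} (\<lambda>u. u^n * exp (-m * u powr Q))) \<longlongrightarrow>
            Gamma ((n+1)/Q) / (Q * m powr ((n+1)/Q))) at_top"
proof -
  define z where "z = (n+1)/Q"
  have z: "z > 0" using Q by (simp add: z_def)
  define Gi where "Gi = (\<lambda>v::real. v powr (z - 1) / exp v)"
  define f where "f = (\<lambda>u::real. u^n * exp (-m * u powr Q))"
  define C where "C = 1 / (Q * m powr z)"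
  have Phi: "((\<lambda>b. integral {0..b} Gi) \<longlongrightarrow> Gamma z) at_top"
    unfolding Gi_def by (rule integral_lim[OF Gamma_integral_real[OF z]]) auto
  have key: "integral {0..t} f = C * integral {0..m * t powr Q} Gi" if t: "t > 0" for t
  proof -
    define b where "b = m * t powr Q"
    have b: "b > 0" using t m by (simp add: b_def)
    define g where "g = (\<lambda>v::real. (v/m) powr (1/Q))"
    define g' where "g' = (\<lambda>v::real. (1/Q) * (v/m) powr (1/Q - 1) / m)"
    have g0: "g 0 = 0" by (simp add: g_def)
    have gb: "g b = t" using t m Q by (simp add: g_def b_def powr_powr)
    have gmono: "g v \<le> g b" if "v \<le> b" "0 \<le> v" for v
      unfolding g_def using that m Q by (intro powr_mono2) (auto simp: divide_right_mono)
    have gnn: "g v \<ge> 0" for v by (simp add: g_def)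
    have sub: "g ` {0..b} \<subseteq> {0..t}" using gmono gnn gb by auto
    have fc: "continuous_on {0..t} f"
      unfolding f_def using Q
      by (intro continuous_intros continuous_on_powr'; auto)
    have gc: "continuous_on {0..b} g"
      unfolding g_def using Q m
      by (intro continuous_on_powr' continuous_intros; auto)
    have gd: "(g has_field_derivative g' v) (at v within {0..b})" if "v \<in> {0..b} - {0}" for v
    proof -
      have v: "v > 0" using that by auto
      have "(g has_field_derivative g' v) (at v)"
        unfolding g_def g'_def using v m
        by (auto intro!: derivative_eq_intros simp: powr_diff)
      then show ?thesis by (rule has_field_derivative_at_within)
    qed
    have I: "((\<lambda>x. g' x *\<^sub>R f (g x)) has_integral
               (integral {g 0..g b} f - integral {g b..g 0} f)) {0..b}"
      by (rule has_integral_substitution_general[where s="{0}", OF _ _ sub fc gc gd]) (use b in auto)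
    have I2: "((\<lambda>x. g' x *\<^sub>R f (g x)) has_integral integral {0..t} f) {0..b}"
      using I t by (simp add: g0 gb)
    have eq: "g' v *\<^sub>R f (g v) = C * Gi v" if "v \<in> {0..b} - {0}" for v
    proof -
      have v: "v > 0" using that by auto
      have "f (g v) = (v/m) powr (n/Q) * exp (-v)"
        using v m Q by (simp add: f_def g_def powr_powr powr_realpow[symmetric] mult.commute)
      then have "g' v *\<^sub>R f (g v) = (1/Q) * (1/m) * ((v/m) powr (1/Q - 1) * (v/m) powr (n/Q)) * exp (-v)"
        by (simp add: g'_def)
      also have "(v/m) powr (1/Q - 1) * (v/m) powr (n/Q) = (v/m) powr (z - 1)"
      proof -
        have "1/Q - 1 + n/Q = z - 1" by (simp add: z_def add_divide_distrib)
        then show ?thesis by (metis powr_add)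
      qed
      also have "\<dots> = v powr (z - 1) / m powr (z - 1)"
        using v m by (simp add: powr_divide)
      finally have *: "g' v *\<^sub>R f (g v) = (1/Q) * (1/m) * (v powr (z - 1) / m powr (z - 1)) * exp (-v)" .
      have mz: "m powr z = m powr (z-1) * m"
        using m powr_add[of m "z-1" 1] by simp
      show ?thesis unfolding * C_def Gi_def mz using m Q
        by (simp add: exp_minus field_simps)
    qed
    have "((\<lambda>v. C * Gi v) has_integral integral {0..t} f) {0..b}"
      by (rule has_integral_spike_finite[where S="{0}", OF _ _ I2]) (use eq in auto)
    moreover have "((\<lambda>v. C * Gi v) has_integral C * integral {0..b} Gi) {0..b}"
    proof -
      have "Gi integrable_on {0..b}"
        unfolding Gi_def using z
        by (rule integrable_on_subinterval[OF has_integral_integrable[OF Gamma_integral_real]]) auto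
      then show ?thesis by (intro has_integral_mult_right integrable_integral)
    qed
    ultimately show ?thesis by (simp add: b_def has_integral_unique)
  qed
  have "((\<lambda>t. C * integral {0..m * t powr Q} Gi) \<longlongrightarrow> C * Gamma z) at_top"
    by (intro tendsto_mult tendsto_const filterlim_compose[OF Phi powr_at_top_lim[OF m Q]])
  then have "((\<lambda>t. integral {0..t} f) \<longlongrightarrow> C * Gamma z) at_top"
    by (rule Lim_transform_eventually)
       (use eventually_gt_at_top[of 0] in \<open>eventually_elim, simp add: key\<close>)
  then show ?thesis by (simp add: f_def C_def z_def)
qed



lemma eq_by_ln: "(X::real) > 0 \<Longrightarrow> Y > 0 \<Longrightarrow> ln X = ln Y \<Longrightarrow> X = Y"
  by simp

lemma cst1:
  fixes p c a :: real assumes p: "p > 0" and c: "c > 0" and a: "a > 0"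
  shows "a / ((2*p+1) * (c * a powr p / (2 powr p * (2*p+1))) powr (1/(2*p+1))) =
         (2 powr p / (c * (2*p+1) powr (2*p))) powr (1/(2*p+1)) * a powr ((p+1)/(2*p+1))"
proof (rule eq_by_ln)
  define q where "q = 2*p+1"
  have q: "q > 0" using p by (simp add: q_def)
  define K where "K = c * a powr p / (2 powr p * q)"
  have K: "K > 0" using c a q by (simp add: K_def)
  have lK: "ln K = ln c + p * ln a - p * ln 2 - ln q"
    using c a q by (simp add: K_def ln_mult ln_div ln_powr)
  have l1: "ln (a / (q * K powr (1/q))) = ln a - ln q - (1/q) * ln K"
    using a q K by (simp add: ln_mult ln_div ln_powr)
  have l2: "ln ((2 powr p / (c * q powr (2*p))) powr (1/q) * a powr ((p+1)/q)) =
     (1/q) * (p * ln 2 - ln c - 2*p * ln q) + (p+1)/q * ln a"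
    using a q c by (simp add: ln_mult ln_div ln_powr)
  have "ln (a / (q * K powr (1/q))) = ln ((2 powr p / (c * q powr (2*p))) powr (1/q) * a powr ((p+1)/q))"
    unfolding l1 l2 lK using q by (simp add: field_simps) (simp add: q_def algebra_simps)
  then show "ln (a / ((2*p+1) * (c * a powr p / (2 powr p * (2*p+1))) powr (1/(2*p+1)))) =
        ln ((2 powr p / (c * (2*p+1) powr (2*p))) powr (1/(2*p+1)) * a powr ((p+1)/(2*p+1)))"
    by (simp add: K_def q_def)
qed (use p c a in auto)


lemma cst2:
  fixes p c a :: real assumes p: "p > 0" and c: "c > 0" and a: "a > 0"
  shows "a / ((2*p+1) * (c * a powr p / (2 powr p * (2*p+1))) powr (2/(2*p+1))) =
         (2*p+1) powr ((1 - 2*p)/(2*p+1)) * (2 powr p / c) powr (2/(2*p+1)) * a powr (1/(2*p+1))"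
proof (rule eq_by_ln)
  define q where "q = 2*p+1"
  have q: "q > 0" using p by (simp add: q_def)
  define K where "K = c * a powr p / (2 powr p * q)"
  have K: "K > 0" using c a q by (simp add: K_def)
  have lK: "ln K = ln c + p * ln a - p * ln 2 - ln q"
    using c a q by (simp add: K_def ln_mult ln_div ln_powr)
  have l1: "ln (a / (q * K powr (2/q))) = ln a - ln q - (2/q) * ln K"
    using a q K by (simp add: ln_mult ln_div ln_powr)
  have l2: "ln (q powr ((1 - 2*p)/q) * (2 powr p / c) powr (2/q) * a powr (1/q)) =
     (1 - 2*p)/q * ln q + (2/q) * (p * ln 2 - ln c) + (1/q) * ln a"
    using a q c by (simp add: ln_mult ln_div ln_powr)
  have "ln (a / (q * K powr (2/q))) = ln (q powr ((1 - 2*p)/q) * (2 powr p / c) powr (2/q) * a powr (1/q))"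
    unfolding l1 l2 lK using q by (simp add: field_simps) (simp add: q_def algebra_simps)
  then show "ln (a / ((2*p+1) * (c * a powr p / (2 powr p * (2*p+1))) powr (2/(2*p+1)))) =
        ln ((2*p+1) powr ((1 - 2*p)/(2*p+1)) * (2 powr p / c) powr (2/(2*p+1)) * a powr (1/(2*p+1)))"
    by (simp add: K_def q_def)
qed (use p c a in auto)

lemma cst3:
  fixes p c a c2 :: real assumes p: "p > 0" and c: "c > 0" and a: "a > 0" and c2: "c2 > 0"
  shows "a / ((p+1) * (c * (c2 * a powr ((p+1)/(2*p+1))) powr p / (p+1)) powr (1/(p+1))) =
         a powr ((p+1)/(2*p+1)) / (c powr (1/(p+1)) * (c2*(p+1)) powr (p/(p+1)))"
proof (rule eq_by_ln)
  define q where "q = 2*p+1"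
  have q: "q > 0" using p by (simp add: q_def)
  define A where "A = a powr ((p+1)/q)"
  have A: "A > 0" using a by (simp add: A_def)
  have lA: "ln A = (p+1)/q * ln a" using a by (simp add: A_def ln_powr)
  define K where "K = c * (c2 * A) powr p / (p+1)"
  have K: "K > 0" using c A c2 p by (simp add: K_def)
  have lK: "ln K = ln c + p * (ln c2 + ln A) - ln (p+1)"
    using c A c2 p by (simp add: K_def ln_mult ln_div ln_powr)
  have l1: "ln (a / ((p+1) * K powr (1/(p+1)))) = ln a - ln (p+1) - (1/(p+1)) * ln K"
    using a p K by (simp add: ln_mult ln_div ln_powr)
  have l2: "ln (A / (c powr (1/(p+1)) * (c2*(p+1)) powr (p/(p+1)))) =
     ln A - (1/(p+1)) * ln c - (p/(p+1)) * (ln c2 + ln (p+1))"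
    using A c c2 p by (simp add: ln_mult ln_div ln_powr)
  have "ln (a / ((p+1) * K powr (1/(p+1)))) = ln (A / (c powr (1/(p+1)) * (c2*(p+1)) powr (p/(p+1))))"
    proof -
      have p1: "p + 1 > 0" using p by simp
      define r where "r = 1/q"
      define s where "s = 1/(p+1)"
      have rs: "r * q = 1" "s * (p+1) = 1" using q p1 by (auto simp: r_def s_def)
      have e: "(p+1)/q = (p+1)*r" "1/(p+1) = s" "p/(p+1) = p * s" by (simp_all add: r_def s_def)
      show ?thesis unfolding l1 l2 lK lA unfolding e using rs q_def by algebra
    qed
  then show "ln (a / ((p+1) * (c * (c2 * a powr ((p+1)/(2*p+1))) powr p / (p+1)) powr (1/(p+1)))) =
        ln (a powr ((p+1)/(2*p+1)) / (c powr (1/(p+1)) * (c2*(p+1)) powr (p/(p+1))))"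
    by (simp add: K_def q_def A_def)
qed (use p c a c2 in auto)

lemma cst4:
  fixes p a :: real assumes p: "p > 0" and a: "a > 0"
  shows "a * a powr (1/(2*p+1)) = a powr ((p+1)/(2*p+1)) * a powr ((p+1)/(2*p+1))"
proof -
  have "a * a powr (1/(2*p+1)) = a powr (1 + 1/(2*p+1))" using a by (simp add: powr_add)
  also have "1 + 1/(2*p+1) = (p+1)/(2*p+1) + (p+1)/(2*p+1)"
  proof -
    define r where "r = 1/(2*p+1)"
    have "2*p+1 > 0" using p by simp
    then have rs: "r * (2*p+1) = 1" by (simp add: r_def)
    have e: "1/(2*p+1) = r" "(p+1)/(2*p+1) = (p+1)*r" by (simp_all add: r_def)
    show ?thesis unfolding e using rs by algebra
  qed
  also have "a powr \<dots> = a powr ((p+1)/(2*p+1)) * a powr ((p+1)/(2*p+1))" by (rule powr_add)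
  finally show ?thesis .
qed



lemma incr_open':
  fixes f f' :: "real \<Rightarrow> real"
  assumes "a \<le> b" "continuous_on {a..b} f"
    "\<And>t. a < t \<Longrightarrow> t < b \<Longrightarrow> (f has_real_derivative f' t) (at t)"
    "\<And>t. a < t \<Longrightarrow> t < b \<Longrightarrow> f' t \<ge> 0" "f a = v"
  shows "v \<le> f b"
  using incr_open[OF assms(1-4)] assms(5) by simp

lemma int_deriv:
  fixes f :: "real \<Rightarrow> real"
  assumes "continuous_on {0..b} f" "0 < t" "t < b"
  shows "((\<lambda>x. integral {0..x} f) has_real_derivative f t) (at t)"
proof -
  have "((\<lambda>x. integral {0..x} f) has_real_derivative f t) (at t within {0..b})"
    using assms by (intro integral_has_real_derivative) auto
  then show ?thesis using assms by (simp add: at_within_Icc_at)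
qed

lemma powr_shift_deriv:
  fixes s T r :: real
  assumes "s > T"
  shows "((\<lambda>u. (u - T) powr r) has_real_derivative r * (s - T) powr (r - 1)) (at s)"
proof -
  have "((\<lambda>u. u powr r) has_real_derivative r * (s-T) powr (r-1)) (at (s - T))"
    using assms by (intro has_real_derivative_powr) auto
  moreover have "((\<lambda>u. u - T) has_real_derivative 1) (at s)"
    by (auto intro!: derivative_eq_intros)
  ultimately show ?thesis using DERIV_chain2 by fastforce
qed

theorem lemma4:
  fixes p c a :: real and x x1 x2 :: "real \<Rightarrow> real"
  assumes hp: "p \<ge> 1" and hc: "c > 0" and ha: "a > 0"
    and d0: "\<And>t. t \<ge> 0 \<Longrightarrow> (x has_real_derivative x1 t) (at t within {0..})"
    and d1: "\<And>t. t \<ge> 0 \<Longrightarrow> (x1 has_real_derivative x2 t) (at t within {0..})"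
    and d2: "\<And>t. t \<ge> 0 \<Longrightarrow>
               (x2 has_real_derivative (- c * (x t) powr p * x2 t)) (at t within {0..})"
    and init: "x 0 = 0" "x1 0 = 0" "x2 0 = a"
  shows "\<exists>h. (x1 \<longlongrightarrow> h) at_top \<and>
             const_c2 p c * a powr ((p+1)/(2*p+1)) \<le> h \<and>
             h \<le> const_c1 p c * a powr ((p+1)/(2*p+1))"
proof -
  have D0: "(x has_real_derivative x1 t) (at t)" if "t > 0" for t
    using d0[of t] that deriv_at_pos by auto
  have D1: "(x1 has_real_derivative x2 t) (at t)" if "t > 0" for t
    using d1[of t] that deriv_at_pos by auto
  have D2: "(x2 has_real_derivative (- c * (x t) powr p * x2 t)) (at t)" if "t > 0" for t
    using d2[of t] that deriv_at_pos by auto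
  have cx: "continuous_on {s..t} x" if "s \<ge> 0" for s t
    using cont_from_deriv[OF d0] by (rule continuous_on_subset) (use that in auto)
  have cx1: "continuous_on {s..t} x1" if "s \<ge> 0" for s t
    using cont_from_deriv[OF d1] by (rule continuous_on_subset) (use that in auto)
  have cx2: "continuous_on {s..t} x2" if "s \<ge> 0" for s t
    using cont_from_deriv[OF d2] by (rule continuous_on_subset) (use that in auto)
  have p0: "p > 0" using hp by simp

  have pos2: "x2 t > 0" if t: "t \<ge> 0" for t
  proof (rule ccontr)
    assume neg: "\<not> x2 t > 0"
    define S where "S = {s \<in> {0..t}. x2 s \<le> 0}"
    have tS: "t \<in> S" using t neg by (simp add: S_def)
    have cS: "closed S"
    proof -
      have "closed ({0..t} \<inter> x2 -` {..0})"
        by (intro continuous_closed_preimage cx2) auto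
      moreover have "{0..t} \<inter> x2 -` {..0} = S" by (auto simp: S_def)
      ultimately show ?thesis by simp
    qed
    have bS: "bdd_below S" by (auto simp: S_def intro!: bdd_belowI[of _ 0])
    define t0 where "t0 = Inf S"
    have "t0 \<in> S" unfolding t0_def using closed_contains_Inf[OF _ bS cS] tS by auto
    then have t0: "0 \<le> t0" "t0 \<le> t" "x2 t0 \<le> 0" by (auto simp: S_def)
    have below: "x2 s > 0" if "0 \<le> s" "s < t0" for s
    proof (rule ccontr)
      assume "\<not> x2 s > 0"
      then have "s \<in> S" using that t0 by (auto simp: S_def)
      then have "t0 \<le> s" unfolding t0_def by (rule cInf_lower[OF _ bS])
      with that show False by simp
    qed
    have t0pos: "t0 > 0" using t0 init ha by (cases "t0 = 0") auto
    have xmono: "x s \<le> x t0" if "0 \<le> s" "s \<le> t0" for s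
    proof -
      have x1nn: "x1 u \<ge> 0" if "0 \<le> u" "u \<le> t0" for u
        by (rule incr_open'[of 0 u x1 x2, OF _ cx1]) (use that D1 below init in \<open>auto intro: less_imp_le\<close>)
      show ?thesis
        by (rule incr_open[of s t0 x x1, OF _ cx]) (use that D0 x1nn in \<open>auto intro: less_imp_le\<close>)
    qed
    have xnn: "x s \<ge> 0" if "0 \<le> s" "s \<le> t0" for s
    proof -
      have x1nn: "x1 u \<ge> 0" if "0 \<le> u" "u \<le> t0" for u
        by (rule incr_open'[of 0 u x1 x2, OF _ cx1]) (use that D1 below init in \<open>auto intro: less_imp_le\<close>)
      show ?thesis
        by (rule incr_open'[of 0 s x x1, OF _ cx]) (use that D0 x1nn init in \<open>auto intro: less_imp_le\<close>)
    qed
    define M where "M = c * x t0 powr p"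
    define y where "y = (\<lambda>s. x2 s * exp (M * s))"
    have "y 0 \<le> y t0"
    proof (rule incr_open[of 0 t0 y "\<lambda>s. x2 s * exp (M * s) * (M - c * x s powr p)"])
      show "continuous_on {0..t0} y" unfolding y_def
        by (intro continuous_intros cx2) auto
    next
      fix u assume u: "0 < u" "u < t0"
      show "(y has_real_derivative x2 u * exp (M * u) * (M - c * x u powr p)) (at u)"
        unfolding y_def using u
        by (auto intro!: derivative_eq_intros D2 simp: algebra_simps)
    next
      fix u assume u: "0 < u" "u < t0"
      have "x u powr p \<le> x t0 powr p" using xmono xnn u p0 by (intro powr_mono2) auto
      then have "M - c * x u powr p \<ge> 0" using hc by (simp add: M_def)
      then show "x2 u * exp (M * u) * (M - c * x u powr p) \<ge> 0"
        using below[of u] u by simp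
    qed (use t0pos in auto)
    then have "a \<le> x2 t0 * exp (M * t0)" by (simp add: y_def init)
    moreover have "x2 t0 * exp (M * t0) \<le> 0" using t0 by (simp add: mult_nonpos_nonneg)
    ultimately show False using ha by linarith
  qed
  have x1nn: "x1 t \<ge> 0" if "t \<ge> 0" for t
    by (rule incr_open'[of 0 t x1 x2, OF _ cx1]) (use that D1 pos2 init in \<open>auto intro: less_imp_le\<close>)
  have x1mono: "x1 s \<le> x1 t" if "0 \<le> s" "s \<le> t" for s t
    by (rule incr_open[of s t x1 x2, OF _ cx1]) (use that D1 pos2 in \<open>auto intro: less_imp_le\<close>)
  have xnn: "x t \<ge> 0" if "t \<ge> 0" for t
    by (rule incr_open'[of 0 t x x1, OF _ cx]) (use that D0 x1nn init in \<open>auto intro: less_imp_le\<close>)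
  have x2le: "x2 t \<le> a" if "t \<ge> 0" for t
  proof -
    have "(- x2) 0 \<le> (- x2) t"
    proof (rule incr_open[of 0 t "- x2" "\<lambda>s. c * x s powr p * x2 s"])
      show "continuous_on {0..t} (- x2)" using cx2[of 0 t] by (simp add: fun_Compl_def continuous_on_minus)
    next
      fix u assume u: "0 < u" "u < t"
      show "(- x2 has_real_derivative c * x u powr p * x2 u) (at u)"
        using DERIV_minus[OF D2[of u]] u by (simp add: fun_Compl_def)
    next
      fix u assume u: "0 < u" "u < t"
      show "c * x u powr p * x2 u \<ge> 0" using hc pos2[of u] u by simp
    qed (use that in auto)
    then show ?thesis using init by simp
  qed

  have x1le: "x1 t \<le> a * t" if "t \<ge> 0" for t
  proof -
    have "0 \<le> a * t - x1 t"
      by (rule incr_open'[of 0 t "\<lambda>s. a * s - x1 s" "\<lambda>s. a - x2 s"])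
         (use that init x2le in \<open>auto intro!: derivative_eq_intros D1 continuous_intros cx1\<close>)
    then show ?thesis by simp
  qed
  have xle: "x t \<le> a * t^2 / 2" if "t \<ge> 0" for t
  proof -
    have "0 \<le> a * t^2/2 - x t"
      by (rule incr_open'[of 0 t "\<lambda>s. a * s^2/2 - x s" "\<lambda>s. a * s - x1 s"])
         (use that init x1le in \<open>auto intro!: derivative_eq_intros D0 continuous_intros cx\<close>)
    then show ?thesis by simp
  qed
  define q where "q = 2*p+1"
  have q: "q > 0" "q - 1 = 2*p" using p0 by (auto simp: q_def)
  define k where "k = c * a powr p / (2 powr p * q)"
  have k: "k > 0" using hc ha q by (simp add: k_def)
  define L where "L = (\<lambda>s. a * exp (-k * s powr q))"
  have Lc: "continuous_on S L" if "S \<subseteq> {0..}" for S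
  proof -
    have "continuous_on S (\<lambda>s. s powr q)"
      by (intro continuous_on_powr' continuous_intros) (use that q in auto)
    then show ?thesis unfolding L_def by (intro continuous_on_mult_left continuous_on_exp)
  qed
  have x2ge: "x2 t \<ge> L t" if t: "t \<ge> 0" for t
  proof -
    define y where "y = (\<lambda>s. x2 s * exp (k * s powr q))"
    have "a \<le> y t"
    proof (rule incr_open'[of 0 t y "\<lambda>s. x2 s * exp (k * s powr q) * (k * (q * s powr (q - 1)) - c * x s powr p)"])
      have "continuous_on {0..t} (\<lambda>s. s powr q)"
        by (intro continuous_on_powr' continuous_intros) (use q in auto)
      then show "continuous_on {0..t} y" unfolding y_def
        by (intro continuous_on_mult cx2 continuous_on_mult_left continuous_on_exp) auto
    next
      fix u assume u: "0 < u" "u < t"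
      have "((\<lambda>s. (s - 0) powr q) has_real_derivative q * (u - 0) powr (q - 1)) (at u)"
        using u by (intro powr_shift_deriv) auto
      then have pd: "((\<lambda>s. s powr q) has_real_derivative q * u powr (q - 1)) (at u)" by simp
      show "(y has_real_derivative x2 u * exp (k * u powr q) * (k * (q * u powr (q - 1)) - c * x u powr p)) (at u)"
        unfolding y_def using u
        by (auto intro!: derivative_eq_intros D2 pd simp: algebra_simps)
    next
      fix u assume u: "0 < u" "u < t"
      have "x u powr p \<le> (a * u^2 / 2) powr p"
        using xle[of u] xnn[of u] u p0 by (intro powr_mono2) auto
      also have "(a * u^2 / 2) powr p = a powr p * u powr (2*p) / 2 powr p"
      proof -
        have e1: "u powr (2*p) = (u powr 2) powr p" by (simp add: powr_powr)
        have e2: "u powr 2 = u^2" using u powr_realpow[of u 2] by simp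
        have "(u^2) powr p = u powr (2*p)" using e1 e2 by simp
        then show ?thesis using u ha
          by (simp add: powr_mult powr_divide)
      qed
      also have "\<dots> = k * (q * u powr (q - 1)) / c"
        using q hc by (simp add: k_def)
      finally have "c * x u powr p \<le> k * (q * u powr (q - 1))"
        using hc by (simp add: field_simps)
      then show "0 \<le> x2 u * exp (k * u powr q) * (k * (q * u powr (q - 1)) - c * x u powr p)"
        using pos2[of u] u by simp
    qed (use t init in \<open>auto simp: y_def\<close>)
    then have "a * exp (-k * t powr q) \<le> x2 t * exp (k * t powr q) * exp (-k * t powr q)"
      by (simp add: y_def)
    also have "\<dots> = x2 t" by (simp add: exp_minus field_simps)
    finally show ?thesis by (simp add: L_def)
  qed

  define G1 where "G1 = (\<lambda>t. integral {0..t} L)"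
  define Lu where "Lu = (\<lambda>u. u * L u)"
  define J where "J = (\<lambda>t. integral {0..t} Lu)"
  have Luc: "continuous_on S Lu" if "S \<subseteq> {0..}" for S
    unfolding Lu_def by (intro continuous_on_mult continuous_on_id Lc that)
  have Lpos: "L s > 0" for s using ha by (simp add: L_def)
  have G1d: "(G1 has_real_derivative L t) (at t)" if "t > 0" for t
    unfolding G1_def by (rule int_deriv[OF Lc[of "{0..t+1}"]]) (use that in auto)
  have Jd: "(J has_real_derivative Lu t) (at t)" if "t > 0" for t
    unfolding J_def by (rule int_deriv[OF Luc[of "{0..t+1}"]]) (use that in auto)
  have G1c: "continuous_on {s..t} G1" if "s \<ge> 0" for s t
  proof -
    have "continuous_on {0..t} G1" unfolding G1_def
      by (intro indefinite_integral_continuous_1 integrable_continuous_real Lc) auto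
    then show ?thesis by (rule continuous_on_subset) (use that in auto)
  qed
  have Jc: "continuous_on {s..t} J" if "s \<ge> 0" for s t
  proof -
    have "continuous_on {0..t} J" unfolding J_def
      by (intro indefinite_integral_continuous_1 integrable_continuous_real Luc) auto
    then show ?thesis by (rule continuous_on_subset) (use that in auto)
  qed
  have G10: "G1 0 = 0" "J 0 = 0" by (simp_all add: G1_def J_def)
  have x1ge: "x1 t \<ge> G1 t" if "t \<ge> 0" for t
  proof -
    have "0 \<le> x1 t - G1 t"
      by (rule incr_open'[of 0 t "\<lambda>s. x1 s - G1 s" "\<lambda>s. x2 s - L s"])
         (use that init G10 x2ge in \<open>auto intro!: derivative_eq_intros D1 G1d continuous_intros cx1 G1c\<close>)
    then show ?thesis by simp
  qed
  define H where "H = (\<lambda>t. t * G1 t - J t)"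
  have xgeH: "x t \<ge> H t" if "t \<ge> 0" for t
  proof -
    have "0 \<le> x t - H t"
      by (rule incr_open'[of 0 t "\<lambda>s. x s - H s" "\<lambda>s. x1 s - G1 s"])
         (use that init G10 x1ge in \<open>auto simp: H_def Lu_def intro!: derivative_eq_intros D0 G1d Jd continuous_intros cx G1c Jc\<close>)
    then show ?thesis by simp
  qed
  define V1 where "V1 = a * (Gamma ((0+1)/q) / (q * k powr ((0+1)/q)))"
  define V2 where "V2 = a * (Gamma ((1+1)/q) / (q * k powr ((1+1)/q)))"
  have G1lim: "(G1 \<longlongrightarrow> V1) at_top"
  proof -
    have "((\<lambda>t. a * integral {0..t} (\<lambda>u. u^0 * exp (-k * u powr q))) \<longlongrightarrow> V1) at_top"
      unfolding V1_def using gamma_lim[OF k q(1), of 0] by (intro tendsto_mult tendsto_const) simp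
    moreover have "a * integral {0..t} (\<lambda>u. u^0 * exp (-k * u powr q)) = G1 t" for t
      by (simp add: G1_def L_def)
    ultimately show ?thesis by simp
  qed
  have Jlim: "(J \<longlongrightarrow> V2) at_top"
  proof -
    have "((\<lambda>t. a * integral {0..t} (\<lambda>u. u^1 * exp (-k * u powr q))) \<longlongrightarrow> V2) at_top"
      unfolding V2_def using gamma_lim[OF k q(1), of 1] by (intro tendsto_mult tendsto_const) simp
    moreover have "a * integral {0..t} (\<lambda>u. u^1 * exp (-k * u powr q)) = J t" for t
      by (simp add: J_def Lu_def L_def mult.left_commute[of _ a])
    ultimately show ?thesis by simp
  qed
  have V1pos: "V1 > 0" unfolding V1_def using ha q k by (simp add: Gamma_real_pos)
  have V2nn: "V2 \<ge> 0" unfolding V2_def using ha q k by (simp add: Gamma_real_pos less_imp_le)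
  have Hge: "H t \<ge> V1 * t - V2" if t: "t \<ge> 0" for t
  proof -
    have step: "J t - t * G1 t \<le> J s - t * G1 s" if "t \<le> s" for s
      by (rule incr_open[of t s "\<lambda>u. J u - t * G1 u" "\<lambda>u. Lu u - t * L u"])
         (use that t Lpos in \<open>auto simp: Lu_def intro!: derivative_eq_intros G1d Jd continuous_intros G1c Jc mult_right_mono\<close>)
    have lim: "((\<lambda>s. J s - t * G1 s) \<longlongrightarrow> V2 - t * V1) at_top"
      by (intro tendsto_intros Jlim G1lim)
    have ev: "\<forall>\<^sub>F s in at_top. J t - t * G1 t \<le> J s - t * G1 s"
      using eventually_ge_at_top[of t] by (rule eventually_mono) (rule step)
    have "J t - t * G1 t \<le> V2 - t * V1"
      by (rule tendsto_lowerbound[OF lim ev]) simp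
    then show ?thesis by (simp add: H_def algebra_simps)
  qed

  define T where "T = V2 / V1"
  have T: "T \<ge> 0" "V1 * T = V2" using V1pos V2nn by (auto simp: T_def)
  have xgeT: "x t \<ge> V1 * (t - T)" if "t \<ge> 0" for t
    using xgeH[OF that] Hge[OF that] T by (simp add: algebra_simps)
  define m where "m = c * V1 powr p / (p+1)"
  have m: "m > 0" using hc V1pos p0 by (simp add: m_def)
  have x2tail: "x2 t \<le> a * exp (- m * (t - T) powr (p+1))" if t: "t \<ge> T" for t
  proof -
    define y where "y = (\<lambda>s. x2 s * exp (m * (s - T) powr (p+1)))"
    have "- y T \<le> - y t"
    proof (rule incr_open[of T t "\<lambda>s. - y s" "\<lambda>s. - (x2 s * exp (m * (s - T) powr (p+1)) * (m * ((p+1) * (s - T) powr (p + 1 - 1)) - c * x s powr p))"])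
      have "continuous_on {T..t} (\<lambda>s. (s - T) powr (p+1))"
        by (intro continuous_on_powr' continuous_intros) (use p0 in auto)
      then show "continuous_on {T..t} (\<lambda>s. - y s)" unfolding y_def
        by (intro continuous_on_minus continuous_on_mult cx2 continuous_on_mult_left continuous_on_exp) (use T in auto)
    next
      fix u assume u: "T < u" "u < t"
      have pd: "((\<lambda>s. (s - T) powr (p+1)) has_real_derivative (p+1) * (u - T) powr (p + 1 - 1)) (at u)"
        using u by (intro powr_shift_deriv) auto
      show "((\<lambda>s. - y s) has_real_derivative - (x2 u * exp (m * (u - T) powr (p+1)) * (m * ((p+1) * (u - T) powr (p + 1 - 1)) - c * x u powr p))) (at u)"
        unfolding y_def using u T
        by (auto intro!: derivative_eq_intros D2 pd simp: algebra_simps)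
    next
      fix u assume u: "T < u" "u < t"
      have "(V1 * (u - T)) powr p \<le> x u powr p"
        using xgeT[of u] u T V1pos p0 by (intro powr_mono2) auto
      then have i1: "c * (V1 * (u - T)) powr p \<le> c * x u powr p"
        using hc by (intro mult_left_mono) auto
      have e3: "m * ((p+1) * (u - T) powr (p + 1 - 1)) = c * (V1 * (u - T)) powr p"
        using p0 V1pos u by (simp add: m_def powr_mult)
      have "m * ((p+1) * (u - T) powr (p + 1 - 1)) - c * x u powr p \<le> 0"
        using i1 e3 by linarith
      then show "0 \<le> - (x2 u * exp (m * (u - T) powr (p+1)) * (m * ((p+1) * (u - T) powr (p + 1 - 1)) - c * x u powr p))"
        using pos2[of u] u T by (simp add: mult_nonneg_nonpos)
    qed (use t in auto)
    then have "x2 t * exp (m * (t - T) powr (p+1)) \<le> x2 T" by (simp add: y_def)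
    also have "\<dots> \<le> a" using x2le T by simp
    finally have "x2 t * exp (m * (t - T) powr (p+1)) * exp (- m * (t - T) powr (p+1)) \<le> a * exp (- m * (t - T) powr (p+1))"
      by (simp add: mult_right_mono)
    then show ?thesis by (simp add: exp_minus field_simps)
  qed
  define E where "E = (\<lambda>u. exp (- m * u powr (p+1)))"
  define K where "K = (\<lambda>s. integral {0..s} E)"
  define V3 where "V3 = Gamma ((0+1)/(p+1)) / ((p+1) * m powr ((0+1)/(p+1)))"
  have Ec: "continuous_on S E" if "S \<subseteq> {0..}" for S
  proof -
    have "continuous_on S (\<lambda>s. s powr (p+1))"
      by (intro continuous_on_powr' continuous_intros) (use that p0 in auto)
    then show ?thesis unfolding E_def by (intro continuous_on_mult_left continuous_on_exp)
  qed
  have Klim: "(K \<longlongrightarrow> V3) at_top"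
  proof -
    have "((\<lambda>t. integral {0..t} (\<lambda>u. u^0 * exp (-m * u powr (p+1)))) \<longlongrightarrow> V3) at_top"
      unfolding V3_def using gamma_lim[OF m, of "p+1" 0] p0 by simp
    then show ?thesis by (simp add: K_def E_def)
  qed
  have Kle: "K s \<le> V3" if "s \<ge> 0" for s
  proof -
    have ev: "\<forall>\<^sub>F s' in at_top. K s \<le> K s'"
      using eventually_ge_at_top[of s]
    proof (rule eventually_mono)
      fix s' assume "s \<le> s'"
      then show "K s \<le> K s'" unfolding K_def using that
        by (intro integral_subset_le integrable_continuous_real Ec) (auto simp: E_def)
    qed
    show ?thesis by (rule tendsto_lowerbound[OF Klim ev]) simp
  qed
  have V3nn: "V3 \<ge> 0" using Kle[of 0] by (simp add: K_def)
  have Kd: "((\<lambda>u. K (u - T)) has_real_derivative E (u - T)) (at u)" if "u > T" for u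
  proof -
    have "(K has_real_derivative E (u - T)) (at (u - T))"
      unfolding K_def by (rule int_deriv[OF Ec[of "{0..u - T + 1}"]]) (use that in auto)
    moreover have "((\<lambda>u. u - T) has_real_derivative 1) (at u)"
      by (auto intro!: derivative_eq_intros)
    ultimately show ?thesis using DERIV_chain2 by fastforce
  qed
  have Kc: "continuous_on {T..t} (\<lambda>u. K (u - T))" for t
  proof -
    have "continuous_on {0..t - T} K" unfolding K_def
      by (intro indefinite_integral_continuous_1 integrable_continuous_real Ec) auto
    then show ?thesis
      by (rule continuous_on_compose2[of _ K]) (auto intro!: continuous_intros)
  qed
  define U where "U = a * T + a * V3"
  have x2tailE: "x2 u \<le> a * E (u - T)" if "u \<ge> T" for u
    using x2tail[OF that] by (simp add: E_def)
  have K0: "K 0 = 0" by (simp add: K_def)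
  have x1le_U: "x1 t \<le> U" if t: "t \<ge> 0" for t
  proof (cases "t \<le> T")
    case True
    then have "x1 t \<le> a * T" using x1le[OF t] ha by (smt (verit) mult_left_mono)
    moreover have "0 \<le> a * V3" using V3nn ha by simp
    ultimately show ?thesis by (simp add: U_def)
  next
    case False
    have "- x1 T \<le> a * K (t - T) - x1 t"
      by (rule incr_open'[of T t "\<lambda>u. a * K (u - T) - x1 u" "\<lambda>u. a * E (u - T) - x2 u"])
         (use False T x2tailE K0 in \<open>auto intro!: derivative_eq_intros D1 Kd continuous_intros cx1 Kc\<close>)
    then have "x1 t \<le> x1 T + a * K (t - T)" by simp
    also have "\<dots> \<le> a * T + a * V3"
      using x1le[of T] T Kle[of "t - T"] False ha by (intro add_mono mult_left_mono) auto
    finally show ?thesis by (simp add: U_def)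
  qed
  define h where "h = Sup (x1 ` {0..})"
  have x1lim: "(x1 \<longlongrightarrow> h) at_top"
    unfolding h_def by (rule mono_lim[OF x1mono x1le_U])
  have hlow: "V1 \<le> h"
  proof (rule tendsto_le[OF _ x1lim G1lim])
    show "\<forall>\<^sub>F t in at_top. G1 t \<le> x1 t"
      using eventually_ge_at_top[of 0] by (rule eventually_mono) (rule x1ge)
  qed simp
  have hup: "h \<le> U"
  proof (rule tendsto_upperbound[OF x1lim])
    show "\<forall>\<^sub>F t in at_top. x1 t \<le> U"
      using eventually_ge_at_top[of 0] by (rule eventually_mono) (rule x1le_U)
  qed simp

  define A where "A = a powr ((p+1)/(2*p+1))"
  have Apos: "A > 0" using ha by (simp add: A_def)
  define c2 where "c2 = const_c2 p c"
  define c3 where "c3 = const_c3 p c"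
  have V1eq: "V1 = c2 * A"
  proof -
    have "V1 = Gamma (1/q) * (a / (q * k powr (1/q)))" by (simp add: V1_def)
    also have "a / (q * k powr (1/q)) = (2 powr p / (c * (2*p+1) powr (2*p))) powr (1/(2*p+1)) * A"
      unfolding q_def k_def A_def by (rule cst1[OF p0 hc ha])
    finally show ?thesis by (simp add: c2_def const_c2_def q_def mult.assoc)
  qed
  have V2eq: "V2 = c3 * a powr (1/(2*p+1))"
  proof -
    have "V2 = Gamma (2/q) * (a / (q * k powr (2/q)))" by (simp add: V2_def)
    also have "a / (q * k powr (2/q)) = (2*p+1) powr ((1 - 2*p)/(2*p+1)) * (2 powr p / c) powr (2/(2*p+1)) * a powr (1/(2*p+1))"
      unfolding q_def k_def by (rule cst2[OF p0 hc ha])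
    finally show ?thesis by (simp add: c3_def const_c3_def q_def mult.assoc)
  qed
  have c2pos: "c2 > 0" using V1pos V1eq Apos by (simp add: zero_less_mult_iff)
  have aV3: "a * V3 = Gamma (1/(p+1)) / (c powr (1/(p+1)) * (c2*(p+1)) powr (p/(p+1))) * A"
  proof -
    have "a * V3 = Gamma (1/(p+1)) * (a / ((p+1) * m powr (1/(p+1))))" by (simp add: V3_def)
    also have "a / ((p+1) * m powr (1/(p+1))) = A / (c powr (1/(p+1)) * (c2*(p+1)) powr (p/(p+1)))"
      unfolding m_def V1eq A_def by (rule cst3[OF p0 hc ha c2pos])
    finally show ?thesis by simp
  qed
  have aT: "a * T = c3 / c2 * A"
  proof -
    have "a * T = c3 * (a * a powr (1/(2*p+1))) / (c2 * A)" by (simp add: T_def V1eq V2eq)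
    also have "a * a powr (1/(2*p+1)) = A * A" unfolding A_def by (rule cst4[OF p0 ha])
    finally show ?thesis using Apos by simp
  qed
  have Ueq: "U = const_c1 p c * A"
    by (simp add: U_def aT aV3 const_c1_def c2_def[symmetric] c3_def[symmetric] distrib_right)
  show ?thesis
  proof (intro exI conjI)
    show "(x1 \<longlongrightarrow> h) at_top" by (rule x1lim)
    show "const_c2 p c * a powr ((p+1)/(2*p+1)) \<le> h" using hlow V1eq by (simp add: c2_def A_def)
    show "h \<le> const_c1 p c * a powr ((p+1)/(2*p+1))" using hup Ueq by (simp add: A_def)
  qed
qed


end
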